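(* Let $S\subseteq\{0,1\}^n$ and $f:S\to\{0,1\}$. If $f$ is total (i.e. $S=\{0,1\}^n$) then $\mathsf{maxPI}(f)\le\sqrt{C_0(f)C_1(f)}$. If $f$ is partial then $\mathsf{maxPI}(f)\le\min\{\sqrt{nC_0(f)},\sqrt{nC_1(f)}\}$.
   Context: A certificate for $f$ on $x\in S$ is a set $I\subseteq[n]$ such that every $y\in S$ with $y_i=x_i$ for all $i\in I$ satisfies $f(y)=f(x)$. $C_0(f)$ (resp. $C_1(f)$) is the maximum over $x\in f^{-1}(0)$ (resp. $f^{-1}(1)$) of the minimum size of a certificate for $x$. With $p=\{p_x:x\in S\}$ ranging over families of probability distributions on $[n]$, $$\mathsf{maxPI}(f)=\min_{p}\ \max_{x,y\in S:\ f(x)\neq f(y)} \frac{1}{\max_{i:\,x_i\neq y_i}\sqrt{p_x(i)p_y(i)}}.$$ *)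

theory Defs
  imports "HOL-Analysis.Analysis"
begin

text \<open>Bit strings of length n are functions nat => bool that vanish (are False)
  outside the index set [n] = {0..<n}; bit 1 is True, bit 0 is False.\<close>

definition cube :: "nat \<Rightarrow> (nat \<Rightarrow> bool) set" where
  "cube n = {x. \<forall>i. n \<le> i \<longrightarrow> \<not> x i}"

definition is_certificate ::
  "nat \<Rightarrow> (nat \<Rightarrow> bool) set \<Rightarrow> ((nat \<Rightarrow> bool) \<Rightarrow> bool) \<Rightarrow> (nat \<Rightarrow> bool) \<Rightarrow> nat set \<Rightarrow> bool" where
  "is_certificate n S f x I \<longleftrightarrow>
     I \<subseteq> {..<n} \<and> (\<forall>y\<in>S. (\<forall>i\<in>I. y i = x i) \<longrightarrow> f y = f x)"

definition min_cert_size ::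
  "nat \<Rightarrow> (nat \<Rightarrow> bool) set \<Rightarrow> ((nat \<Rightarrow> bool) \<Rightarrow> bool) \<Rightarrow> (nat \<Rightarrow> bool) \<Rightarrow> nat" where
  "min_cert_size n S f x = Min (card ` {I. is_certificate n S f x I})"

definition Ccert ::
  "nat \<Rightarrow> (nat \<Rightarrow> bool) set \<Rightarrow> ((nat \<Rightarrow> bool) \<Rightarrow> bool) \<Rightarrow> bool \<Rightarrow> nat" where
  "Ccert n S f b =
     (if {x\<in>S. f x = b} = {} then 0
      else Max (min_cert_size n S f ` {x\<in>S. f x = b}))"

definition prob_family ::
  "nat \<Rightarrow> (nat \<Rightarrow> bool) set \<Rightarrow> ((nat \<Rightarrow> bool) \<Rightarrow> nat \<Rightarrow> real) \<Rightarrow> bool" where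
  "prob_family n S p \<longleftrightarrow>
     (\<forall>x\<in>S. (\<forall>i<n. 0 \<le> p x i) \<and> (\<Sum>i<n. p x i) = 1)"

definition pair_cost ::
  "nat \<Rightarrow> ((nat \<Rightarrow> bool) \<Rightarrow> nat \<Rightarrow> real) \<Rightarrow> (nat \<Rightarrow> bool) \<Rightarrow> (nat \<Rightarrow> bool) \<Rightarrow> ereal" where
  "pair_cost n p x y =
     (let m = Max ((\<lambda>i. sqrt (p x i * p y i)) ` {i. i < n \<and> x i \<noteq> y i})
      in if 0 < m then ereal (1 / m) else \<infinity>)"

definition maxPI ::
  "nat \<Rightarrow> (nat \<Rightarrow> bool) set \<Rightarrow> ((nat \<Rightarrow> bool) \<Rightarrow> bool) \<Rightarrow> ereal" where
  "maxPI n S f =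
     (INF p \<in> {p. prob_family n S p}.
        SUP xy \<in> {(x, y). x \<in> S \<and> y \<in> S \<and> f x \<noteq> f y}. pair_cost n p (fst xy) (snd xy))"

end

theory Submission
  imports Defs
begin

definition cert :: "nat \<Rightarrow> (nat \<Rightarrow> bool) set \<Rightarrow> ((nat \<Rightarrow> bool) \<Rightarrow> bool) \<Rightarrow> (nat \<Rightarrow> bool) \<Rightarrow> nat set" where
  "cert n S f x = (SOME I. is_certificate n S f x I \<and> card I = min_cert_size n S f x)"

definition acert where
  "acert n S f x = (if cert n S f x = {} then {..<n} else cert n S f x)"

definition unif :: "nat set \<Rightarrow> nat \<Rightarrow> real" where
  "unif A i = (if i \<in> A then 1 / real (card A) else 0)"

lemma full_cert:
  assumes "S \<subseteq> cube n" "x \<in> S"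
  shows "is_certificate n S f x {..<n}"
proof -
  have "y = x" if "y \<in> S" "\<forall>i\<in>{..<n}. y i = x i" for y
  proof
    fix i show "y i = x i"
      using that assms unfolding cube_def by (cases "i < n") auto
  qed
  then show ?thesis unfolding is_certificate_def by auto
qed

lemma certs_finite: "finite {I. is_certificate n S f x I}"
  by (rule finite_subset[of _ "Pow {..<n}"]) (auto simp: is_certificate_def)

lemma cert_prop:
  assumes "S \<subseteq> cube n" "x \<in> S"
  shows "is_certificate n S f x (cert n S f x) \<and> card (cert n S f x) = min_cert_size n S f x"
proof -
  let ?C = "{I. is_certificate n S f x I}"
  have "{..<n} \<in> ?C" using full_cert[OF assms] by simp
  then have "Min (card ` ?C) \<in> card ` ?C"
    using certs_finite by (intro Min_in) auto
  then have "\<exists>I. is_certificate n S f x I \<and> card I = min_cert_size n S f x"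
    unfolding min_cert_size_def by force
  then show ?thesis unfolding cert_def by (rule someI_ex)
qed

lemma mcs_le_n:
  assumes "S \<subseteq> cube n" "x \<in> S"
  shows "min_cert_size n S f x \<le> n"
proof -
  have "{..<n} \<in> {I. is_certificate n S f x I}" using full_cert[OF assms] by simp
  then have "card {..<n} \<in> card ` {I. is_certificate n S f x I}" by (rule imageI)
  then have "Min (card ` {I. is_certificate n S f x I}) \<le> card {..<n::nat}"
    using certs_finite by (intro Min_le) auto
  then show ?thesis unfolding min_cert_size_def by simp
qed

lemma cert_le:
  assumes "S \<subseteq> cube n" "x \<in> S" "f x = b"
  shows "min_cert_size n S f x \<le> Ccert n S f b"
proof -
  have fin: "finite (min_cert_size n S f ` {x\<in>S. f x = b})"
    by (rule finite_subset[of _ "{..n}"]) (use mcs_le_n[OF assms(1)] in auto)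
  show ?thesis unfolding Ccert_def using assms fin by (auto intro!: Max_ge)
qed

lemma unif_sum:
  assumes "A \<subseteq> {..<n}" "A \<noteq> {}"
  shows "(\<Sum>i<n. unif A i) = 1"
proof -
  have fA: "finite A" using assms finite_subset by blast
  have "(\<Sum>i<n. unif A i) = (\<Sum>i\<in>A. 1 / real (card A))"
    unfolding unif_def using assms by (simp add: sum.If_cases Int_absorb1 inf.absorb2)
  also have "\<dots> = 1" using fA assms by simp
  finally show ?thesis .
qed

lemma acert_ok:
  assumes "S \<subseteq> cube n" "x \<in> S" "0 < n"
  shows "acert n S f x \<subseteq> {..<n} \<and> acert n S f x \<noteq> {}"
  using cert_prop[OF assms(1,2), of f] assms(3) unfolding acert_def is_certificate_def by auto

lemma bound:
  assumes "prob_family n S p"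
    and "\<And>x y. x\<in>S \<Longrightarrow> y\<in>S \<Longrightarrow> f x \<noteq> f y \<Longrightarrow> pair_cost n p x y \<le> ereal B"
  shows "maxPI n S f \<le> ereal B"
  unfolding maxPI_def
  by (rule INF_lower2[of p]) (use assms in \<open>auto intro!: SUP_least\<close>)

lemma pc_sym: "pair_cost n p x y = pair_cost n p y x"
proof -
  have "{i. i < n \<and> x i \<noteq> y i} = {i. i < n \<and> y i \<noteq> x i}" by auto
  then show ?thesis unfolding pair_cost_def by (simp add: mult.commute)
qed

lemma pc_le:
  assumes "i < n" "x i \<noteq> y i" "p x i = 1 / a" "p y i = 1 / b" "a > 0" "b > 0"
  shows "pair_cost n p x y \<le> ereal (sqrt (a * b))"
proof -
  let ?M = "(\<lambda>i. sqrt (p x i * p y i)) ` {i. i < n \<and> x i \<noteq> y i}"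
  have fin: "finite ?M" by simp
  have v: "sqrt (p x i * p y i) = 1 / sqrt (a * b)"
    using assms by (simp add: real_sqrt_divide)
  have vpos: "1 / sqrt (a * b) > 0" using assms by simp
  have "i \<in> {i. i < n \<and> x i \<noteq> y i}" using assms by simp
  then have "sqrt (p x i * p y i) \<in> ?M" by (rule imageI)
  then have le: "1 / sqrt (a * b) \<le> Max ?M" using fin v by (metis Max_ge)
  then have pos: "Max ?M > 0" using vpos by linarith
  have "1 / Max ?M \<le> 1 / (1 / sqrt (a * b))"
    using le vpos pos by (intro divide_left_mono) (auto intro: mult_pos_pos)
  then have "1 / Max ?M \<le> sqrt (a * b)" by simp
  then show ?thesis unfolding pair_cost_def Let_def using pos by simp
qed

lemma partial_b:
  assumes "0 < n" "S \<subseteq> cube n"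
  shows "maxPI n S f \<le> ereal (sqrt (real n * real (Ccert n S f b)))"
proof -
  define p where "p x = (if f x = b then unif (acert n S f x) else unif {..<n})" for x
  have pf: "prob_family n S p"
    unfolding prob_family_def
  proof (intro ballI conjI allI impI)
    fix x i assume "x \<in> S" "i < n"
    show "0 \<le> p x i" unfolding p_def unif_def by auto
  next
    fix x assume x: "x \<in> S"
    show "(\<Sum>i<n. p x i) = 1"
      using acert_ok[OF assms(2) x assms(1), of f] unif_sum[of "{..<n}" n] assms(1)
        unif_sum[of "acert n S f x" n]
      unfolding p_def by auto
  qed
  have H: "pair_cost n p x y \<le> ereal (sqrt (real n * real (Ccert n S f b)))"
    if x: "x \<in> S" and y: "y \<in> S" and fx: "f x = b" and fy: "f y \<noteq> b" for x y
  proof -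
    let ?I = "cert n S f x"
    have c: "is_certificate n S f x ?I" "card ?I = min_cert_size n S f x"
      using cert_prop[OF assms(2) x] by auto
    obtain i where i: "i \<in> ?I" "y i \<noteq> x i"
      using c(1) y fx fy unfolding is_certificate_def by blast
    have ne: "?I \<noteq> {}" using i by auto
    have iin: "i < n" using c(1) i unfolding is_certificate_def by auto
    have cpos: "card ?I > 0"
      using ne c(1) unfolding is_certificate_def by (meson card_gt_0_iff finite_nat_iff_bounded)
    have px: "p x i = 1 / real (card ?I)"
      using fx i ne unfolding p_def acert_def unif_def by auto
    have py: "p y i = 1 / real n"
      using fy iin unfolding p_def unif_def by auto
    have "pair_cost n p x y \<le> ereal (sqrt (real (card ?I) * real n))"
      by (rule pc_le[OF iin]) (use i px py cpos assms(1) in auto)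
    also have "\<dots> \<le> ereal (sqrt (real n * real (Ccert n S f b)))"
      using cert_le[of S n x f b, OF assms(2) x fx] c(2) by (simp add: mult.commute mult_left_mono)
    finally show ?thesis .
  qed
  show ?thesis
  proof (rule bound[OF pf])
    fix x y assume "x \<in> S" "y \<in> S" "f x \<noteq> f y"
    then show "pair_cost n p x y \<le> ereal (sqrt (real n * real (Ccert n S f b)))"
      using H[of x y] H[of y x] pc_sym[of n p x y] by (cases "f x = b") auto
  qed
qed

lemma total:
  assumes "0 < n" "S = cube n"
  shows "maxPI n S f \<le> ereal (sqrt (real (Ccert n S f False) * real (Ccert n S f True)))"
proof -
  have S: "S \<subseteq> cube n" using assms by simp
  define p where "p x = unif (acert n S f x)" for x
  have pf: "prob_family n S p"
    unfolding prob_family_def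
  proof (intro ballI conjI allI impI)
    fix x i assume "x \<in> S" "i < n"
    show "0 \<le> p x i" unfolding p_def unif_def by auto
  next
    fix x assume x: "x \<in> S"
    show "(\<Sum>i<n. p x i) = 1"
      using acert_ok[OF S x assms(1), of f] unif_sum[of "acert n S f x" n]
      unfolding p_def by auto
  qed
  have H: "pair_cost n p x y \<le> ereal (sqrt (real (Ccert n S f False) * real (Ccert n S f True)))"
    if x: "x \<in> S" and y: "y \<in> S" and fx: "f x = False" and fy: "f y = True" for x y
  proof -
    let ?I = "cert n S f x"
    let ?J = "cert n S f y"
    have c: "is_certificate n S f x ?I" "card ?I = min_cert_size n S f x"
      using cert_prop[OF S x] by auto
    have d: "is_certificate n S f y ?J" "card ?J = min_cert_size n S f y"
      using cert_prop[OF S y] by auto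
    have "\<exists>i\<in>?I \<inter> ?J. x i \<noteq> y i"
    proof (rule ccontr)
      assume nc: "\<not> ?thesis"
      define z where "z i = (if i \<in> ?I then x i else y i)" for i
      have cI: "?I \<subseteq> {..<n}" "\<forall>w\<in>S. (\<forall>i\<in>?I. w i = x i) \<longrightarrow> f w = f x"
        using c(1) unfolding is_certificate_def by auto
      have cJ: "\<forall>w\<in>S. (\<forall>i\<in>?J. w i = y i) \<longrightarrow> f w = f y"
        using d(1) unfolding is_certificate_def by auto
      have "\<not> z i" if "n \<le> i" for i
      proof -
        have "i \<notin> ?I" using cI(1) that by auto
        moreover have "\<not> y i" using y that unfolding assms(2) cube_def by auto
        ultimately show ?thesis unfolding z_def by simp
      qed
      then have zS: "z \<in> S" unfolding assms(2) cube_def by blast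
      have "\<forall>i\<in>?I. z i = x i" unfolding z_def by simp
      then have "f z = f x" using cI(2) zS by blast
      moreover have "f z = f y"
      proof -
        have "\<forall>i\<in>?J. z i = y i" unfolding z_def using nc by auto
        then show ?thesis using cJ zS by blast
      qed
      ultimately show False using fx fy by simp
    qed
    then obtain i where i: "i \<in> ?I" "i \<in> ?J" "x i \<noteq> y i" by blast
    have iin: "i < n" using c(1) i unfolding is_certificate_def by auto
    have cpos: "card ?I > 0"
      using i c(1) finite_subset[of ?I "{..<n}"] unfolding is_certificate_def card_gt_0_iff by auto
    have dpos: "card ?J > 0"
      using i d(1) finite_subset[of ?J "{..<n}"] unfolding is_certificate_def card_gt_0_iff by auto
    have px: "p x i = 1 / real (card ?I)"
      using i unfolding p_def acert_def unif_def by auto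
    have py: "p y i = 1 / real (card ?J)"
      using i unfolding p_def acert_def unif_def by auto
    have "pair_cost n p x y \<le> ereal (sqrt (real (card ?I) * real (card ?J)))"
      by (rule pc_le[OF iin]) (use i px py cpos dpos in auto)
    also have "\<dots> \<le> ereal (sqrt (real (Ccert n S f False) * real (Ccert n S f True)))"
      using cert_le[of S n x f False, OF S x fx] cert_le[of S n y f True, OF S y fy] c(2) d(2)
      by (simp add: mult_mono)
    finally show ?thesis .
  qed
  show ?thesis
  proof (rule bound[OF pf])
    fix x y assume "x \<in> S" "y \<in> S" "f x \<noteq> f y"
    then show "pair_cost n p x y \<le> ereal (sqrt (real (Ccert n S f False) * real (Ccert n S f True)))"
      using H[of x y] H[of y x] pc_sym[of n p x y] by (cases "f x") auto
  qed
qed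

theorem mainTheorem12:
  fixes n :: nat and S :: "(nat \<Rightarrow> bool) set" and f :: "(nat \<Rightarrow> bool) \<Rightarrow> bool"
  assumes "0 < n"
    and "S \<subseteq> cube n"
  shows "(S = cube n \<longrightarrow>
            maxPI n S f \<le> ereal (sqrt (real (Ccert n S f False) * real (Ccert n S f True))))
       \<and> maxPI n S f \<le> ereal (min (sqrt (real n * real (Ccert n S f False)))
                                  (sqrt (real n * real (Ccert n S f True))))"
proof (intro conjI impI)
  assume "S = cube n"
  then show "maxPI n S f \<le> ereal (sqrt (real (Ccert n S f False) * real (Ccert n S f True)))"
    using total assms(1) by blast
next
  show "maxPI n S f \<le> ereal (min (sqrt (real n * real (Ccert n S f False)))
                                  (sqrt (real n * real (Ccert n S f True))))"
    using partial_b[OF assms, of f False] partial_b[OF assms, of f True]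
    by (simp add: min_def)
qed

end
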